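(* Let $d\ge 2$ and let $D$ be obtained by gluing domains $D_1,\dots,D_m\subset T_d$ at a vertex $p$. Then $D$ is optimal if and only if either $p\in\partial D$ and $\sum_{i=1}^m\tau(D_i)+(m-1)\le d-2$, or $p\notin\partial D$ and $\sum_{i=1}^m\tau(D_i)-(d-m)\le d-2$.
   Context: $T_d$ is the $d$-regular tree (connected, acyclic, every vertex of degree $d$). A domain is a finite nonempty connected set $D$ of vertices of $T_d$, identified with its induced subgraph. For $x\in D$, $\deg_D(x)$ is the number of neighbours of $x$ lying in $D$. The (inner vertex) boundary is $\partial D=\{x\in D:\deg_D(x)<d\}$. For $k\ge1$, $I_d(k)=\min\{|\partial D| : D\subset T_d \text{ a domain with } |D|=k\}$, and $D$ is optimal if $|\partial D|=I_d(|D|)$. For $|D|\ge2$, $\tau(D)=\sum_{x\in\partial D}(\deg_D(x)-1)$. Gluing: given domains $D_1,\dots,D_m$ with $|D_i|\ge 2$, $2\le m\le d$, and a vertex $p$ with $p\in\partial D_i$ for all $i$, one says $D$ is obtained by gluing $D_1,\dots,D_m$ at $p$ if $D=\bigcup_{i=1}^m D_i$ and $D_i\cap D_j=\{p\}$ for all $i\ne j$. *)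

theory Defs
  imports Main
begin

text \<open>Concrete model of the d-regular tree T_d: vertices are words of naturals.
  The root is the empty word; it has the d children [i] (i < d); every other
  vertex xs has the d-1 children xs @ [i] (i < d - 1). Adjacency is the
  parent/child relation, so every vertex has degree exactly d and the graph is
  a connected acyclic tree.\<close>

definition tree_vertices :: "nat \<Rightarrow> nat list set" where
  "tree_vertices d = {xs. xs = [] \<or> (hd xs < d \<and> (\<forall>i \<in> set (tl xs). i < d - 1))}"

definition tree_adj :: "nat \<Rightarrow> nat list \<Rightarrow> nat list \<Rightarrow> bool" where
  "tree_adj d x y \<longleftrightarrow> x \<in> tree_vertices d \<and> y \<in> tree_vertices d \<and>
     ((\<exists>i. y = x @ [i]) \<or> (\<exists>i. x = y @ [i]))"

definition induced_edges :: "nat \<Rightarrow> nat list set \<Rightarrow> (nat list \<times> nat list) set" where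
  "induced_edges d D = {(x, y). x \<in> D \<and> y \<in> D \<and> tree_adj d x y}"

definition is_domain :: "nat \<Rightarrow> nat list set \<Rightarrow> bool" where
  "is_domain d D \<longleftrightarrow> finite D \<and> D \<noteq> {} \<and> D \<subseteq> tree_vertices d \<and>
     (\<forall>x \<in> D. \<forall>y \<in> D. (x, y) \<in> (induced_edges d D)\<^sup>*)"

definition degD :: "nat \<Rightarrow> nat list set \<Rightarrow> nat list \<Rightarrow> nat" where
  "degD d D x = card {y \<in> D. tree_adj d x y}"

definition bdry :: "nat \<Rightarrow> nat list set \<Rightarrow> nat list set" where
  "bdry d D = {x \<in> D. degD d D x < d}"

definition Iso :: "nat \<Rightarrow> nat \<Rightarrow> nat" where
  "Iso d k = Min {card (bdry d D) | D. is_domain d D \<and> card D = k}"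

definition optimal :: "nat \<Rightarrow> nat list set \<Rightarrow> bool" where
  "optimal d D \<longleftrightarrow> card (bdry d D) = Iso d (card D)"

definition tau :: "nat \<Rightarrow> nat list set \<Rightarrow> int" where
  "tau d D = (\<Sum>x \<in> bdry d D. int (degD d D x) - 1)"

definition glued_at :: "nat \<Rightarrow> nat list set \<Rightarrow> nat \<Rightarrow> (nat \<Rightarrow> nat list set) \<Rightarrow> nat list \<Rightarrow> bool" where
  "glued_at d D m Ds p \<longleftrightarrow> 2 \<le> m \<and> m \<le> d \<and>
     (\<forall>i \<in> {1..m}. is_domain d (Ds i) \<and> card (Ds i) \<ge> 2 \<and> p \<in> bdry d (Ds i)) \<and>
     D = (\<Union>i \<in> {1..m}. Ds i) \<and>
     (\<forall>i \<in> {1..m}. \<forall>j \<in> {1..m}. i \<noteq> j \<longrightarrow> Ds i \<inter> Ds j = {p})"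

end

theory Submission
  imports Defs
begin


definition nb :: "nat \<Rightarrow> nat list \<Rightarrow> nat list set" where
  "nb d x = {y. tree_adj d x y}"

lemma tv_nil[simp]: "[] \<in> tree_vertices d"
  by (simp add: tree_vertices_def)

lemma tv_single[simp]: "[i] \<in> tree_vertices d \<longleftrightarrow> i < d"
  by (simp add: tree_vertices_def)

lemma tv_snoc:
  assumes "x \<noteq> []" "x \<in> tree_vertices d"
  shows "x @ [i] \<in> tree_vertices d \<longleftrightarrow> i < d - 1"
  using assms by (cases x) (auto simp: tree_vertices_def)

lemma tv_butlast:
  assumes "x \<in> tree_vertices d"
  shows "butlast x \<in> tree_vertices d"
proof (cases x)
  case Nil then show ?thesis by simp
next
  case (Cons a xs)
  show ?thesis
  proof (cases xs)
    case Nil then show ?thesis using Cons by simp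
  next
    case (Cons b ys)
    then show ?thesis using \<open>x = a # xs\<close> assms
      by (auto simp: tree_vertices_def dest: in_set_butlastD)
  qed
qed

lemma nb_nil: "nb d [] = (\<lambda>i. [i]) ` {..<d}"
  by (auto simp: nb_def tree_adj_def)

lemma nb_cons:
  assumes "x \<noteq> []" "x \<in> tree_vertices d"
  shows "nb d x = insert (butlast x) ((\<lambda>i. x @ [i]) ` {..<d-1})"
proof -
  have "x = butlast x @ [last x]" using assms by simp
  show ?thesis
  proof (intro equalityI subsetI)
    fix y assume "y \<in> nb d x"
    then have "y \<in> tree_vertices d" "(\<exists>i. y = x @ [i]) \<or> (\<exists>i. x = y @ [i])"
      by (auto simp: nb_def tree_adj_def)
    then show "y \<in> insert (butlast x) ((\<lambda>i. x @ [i]) ` {..<d-1})"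
      using tv_snoc[OF assms] by auto
  next
    fix y assume "y \<in> insert (butlast x) ((\<lambda>i. x @ [i]) ` {..<d-1})"
    then show "y \<in> nb d x"
      using tv_snoc[OF assms] tv_butlast[OF assms(2)] assms \<open>x = butlast x @ [last x]\<close>
      unfolding nb_def tree_adj_def by (auto intro: exI[of _ "last x"])
  qed
qed

lemma nb_card:
  assumes "x \<in> tree_vertices d" "d \<ge> 1"
  shows "card (nb d x) = d" "finite (nb d x)"
proof -
  have "card (nb d x) = d \<and> finite (nb d x)"
  proof (cases "x = []")
    case True
    then show ?thesis by (simp add: nb_nil card_image inj_on_def)
  next
    case False
    have "butlast x \<notin> (\<lambda>i. x @ [i]) ` {..<d-1}"
    proof
      assume "butlast x \<in> (\<lambda>i. x @ [i]) ` {..<d-1}"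
      then obtain i where "butlast x = x @ [i]" by auto
      then have "length (butlast x) = length x + 1" by simp
      then show False by simp
    qed
    then show ?thesis using False assms
      by (simp add: nb_cons card_image inj_on_def)
  qed
  then show "card (nb d x) = d" "finite (nb d x)" by auto
qed

lemma nb_empty: "x \<notin> tree_vertices d \<Longrightarrow> nb d x = {}"
  by (auto simp: nb_def tree_adj_def)

lemma finite_nb: "d \<ge> 1 \<Longrightarrow> finite (nb d x)"
  by (cases "x \<in> tree_vertices d") (auto simp: nb_card nb_empty)

lemma degD_nb: "degD d D x = card (D \<inter> nb d x)"
  unfolding degD_def nb_def by (metis Collect_conj_eq Collect_mem_eq)

lemma degD_le: "d \<ge> 1 \<Longrightarrow> degD d D x \<le> d"
proof -
  assume "d \<ge> 1"
  show ?thesis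
  proof (cases "x \<in> tree_vertices d")
    case True
    then show ?thesis unfolding degD_nb using nb_card[OF True \<open>d\<ge>1\<close>]
      by (metis card_mono inf_le2)
  next
    case False then show ?thesis by (simp add: degD_nb nb_empty)
  qed
qed

lemma degD_mono: "D \<subseteq> D' \<Longrightarrow> finite D' \<Longrightarrow> degD d D x \<le> degD d D' x"
  unfolding degD_def by (rule card_mono) auto

lemma exists_outside:
  assumes "x \<in> tree_vertices d" "d \<ge> 1" "degD d D x < d"
  shows "\<exists>y. tree_adj d x y \<and> y \<notin> D"
proof (rule ccontr)
  assume "\<not> ?thesis"
  then have "nb d x \<subseteq> D" by (auto simp: nb_def)
  then have "D \<inter> nb d x = nb d x" by auto
  then show False using assms nb_card[OF assms(1,2)] by (simp add: degD_nb)
qed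



lemma adj_in_tv:
  assumes "D \<subseteq> tree_vertices d" "x \<in> D" "y \<in> D"
  shows "tree_adj d x y \<longleftrightarrow> (\<exists>i. y = x @ [i]) \<or> (\<exists>i. x = y @ [i])"
  using assms by (auto simp: tree_adj_def)

lemma path_prefix:
  assumes "(a, b) \<in> (induced_edges d D)\<^sup>*" "butlast a \<notin> D" "a \<noteq> []"
  shows "\<exists>ys. b = a @ ys"
  using assms(1)
proof (induction rule: rtrancl_induct)
  case base then show ?case by simp
next
  case (step b c)
  then obtain ys where ys: "b = a @ ys" by auto
  from step(2) have "c \<in> D" "tree_adj d b c" by (auto simp: induced_edges_def)
  then consider i where "c = b @ [i]" | i where "b = c @ [i]" by (auto simp: tree_adj_def)
  then show ?case
  proof cases
    case 1 then show ?thesis using ys by auto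
  next
    case 2
    show ?thesis
    proof (cases "ys = []")
      case True
      then have "butlast a = c" using 2 ys by simp
      then show ?thesis using \<open>c \<in> D\<close> assms by simp
    next
      case False
      then obtain zs j where "ys = zs @ [j]" by (metis rev_exhaust)
      then show ?thesis using 2 ys by auto
    qed
  qed
qed

lemma top_exists:
  assumes "is_domain d D"
  obtains t where "t \<in> D" "\<And>x. x \<in> D \<Longrightarrow> length t \<le> length x"
    "\<And>x. x \<in> D \<Longrightarrow> x \<noteq> t \<Longrightarrow> x \<noteq> [] \<and> butlast x \<in> D"
proof -
  have fin: "finite D" "D \<noteq> {}" using assms by (auto simp: is_domain_def)
  obtain t where t: "t \<in> D" "\<And>x. x \<in> D \<Longrightarrow> length t \<le> length x"
    using ex_min_if_finite[of "length ` D"] fin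
    by (metis (no_types, lifting) arg_min_if_finite(1,2) not_le_imp_less)
  have "x \<noteq> [] \<and> butlast x \<in> D" if "x \<in> D" "x \<noteq> t" for x
  proof (rule ccontr)
    assume H: "\<not> (x \<noteq> [] \<and> butlast x \<in> D)"
    show False
    proof (cases "x = []")
      case True
      then have "length t \<le> 0" using t(2)[OF that(1)] by simp
      then show False using True that by simp
    next
      case False
      then have "butlast x \<notin> D" using H by simp
      moreover have "(x, t) \<in> (induced_edges d D)\<^sup>*" using assms that t(1) by (auto simp: is_domain_def)
      ultimately obtain ys where "t = x @ ys" using path_prefix False by blast
      moreover have "length t \<le> length x" using t(2) that by simp
      ultimately show False using that by simp
    qed
  qed
  then show ?thesis using that t by blast
qed

lemma degree_sum:
  assumes "is_domain d D"
  shows "(\<Sum>x\<in>D. degD d D x) = 2 * (card D - 1)"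
proof -
  obtain t where t: "t \<in> D" "\<And>x. x \<in> D \<Longrightarrow> length t \<le> length x"
    "\<And>x. x \<in> D \<Longrightarrow> x \<noteq> t \<Longrightarrow> x \<noteq> [] \<and> butlast x \<in> D"
    using top_exists[OF assms] by blast
  have fin: "finite D" and sub: "D \<subseteq> tree_vertices d" using assms by (auto simp: is_domain_def)
  define Ch where "Ch x = {y\<in>D. \<exists>i. y = x @ [i]}" for x
  define Pa where "Pa x = {y\<in>D. \<exists>i. x = y @ [i]}" for x
  have split: "degD d D x = card (Ch x) + card (Pa x)" if "x \<in> D" for x
  proof -
    have "{y \<in> D. tree_adj d x y} = Ch x \<union> Pa x"
      using adj_in_tv[OF sub that] by (auto simp: Ch_def Pa_def)
    moreover have "Ch x \<inter> Pa x = {}"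
      by (auto simp: Ch_def Pa_def)
    moreover have "finite (Ch x)" "finite (Pa x)" using fin by (auto simp: Ch_def Pa_def)
    ultimately show ?thesis unfolding degD_def by (simp add: card_Un_disjoint)
  qed
  have pa: "card (Pa x) = (if x = t then 0 else 1)" if "x \<in> D" for x
  proof -
    have eq: "Pa x = (if x \<noteq> [] \<and> butlast x \<in> D then {butlast x} else {})"
    proof -
      have "(\<exists>i. x = y @ [i]) \<longleftrightarrow> x \<noteq> [] \<and> y = butlast x" for y
        by (metis append_butlast_last_id butlast_snoc snoc_eq_iff_butlast)
      then show ?thesis by (auto simp: Pa_def)
    qed
    show ?thesis
    proof (cases "x = t")
      case True
      have "butlast t \<notin> D" if "t \<noteq> []"
      proof
        assume "butlast t \<in> D"
        then have "length t \<le> length (butlast t)" using t(2) by blast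
        then show False using that by (metis One_nat_def diff_less le_less_trans length_butlast length_greater_0_conv less_irrefl zero_less_one)
      qed
      then show ?thesis using True eq by auto
    next
      case False
      then show ?thesis using t(3)[OF that False] eq by simp
    qed
  qed
  have s1: "(\<Sum>x\<in>D. card (Pa x)) = card D - 1"
  proof -
    have "(\<Sum>x\<in>D. card (Pa x)) = (\<Sum>x\<in>D. if x = t then 0 else 1)"
      by (rule sum.cong) (auto simp: pa)
    also have "\<dots> = card (D - {t})"
      using fin by (simp add: sum.If_cases Int_def set_diff_eq)
    also have "\<dots> = card D - 1" using t(1) fin by simp
    finally show ?thesis .
  qed
  have s2: "(\<Sum>x\<in>D. card (Ch x)) = card D - 1"
  proof -
    have "(\<Sum>x\<in>D. card (Ch x)) = card (\<Union>x\<in>D. Ch x)"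
      by (rule card_UN_disjoint[symmetric]) (use fin in \<open>auto simp: Ch_def\<close>)
    also have "(\<Union>x\<in>D. Ch x) = D - {t}"
    proof (intro equalityI subsetI)
      fix y assume "y \<in> (\<Union>x\<in>D. Ch x)"
      then obtain x i where "x \<in> D" "y \<in> D" "y = x @ [i]" by (auto simp: Ch_def)
      moreover have "length t \<le> length x" using t(2) \<open>x \<in> D\<close> by blast
      ultimately show "y \<in> D - {t}" by auto
    next
      fix y assume "y \<in> D - {t}"
      then have "y \<noteq> []" "butlast y \<in> D" "y \<in> D" using t(3) by auto
      then show "y \<in> (\<Union>x\<in>D. Ch x)" unfolding Ch_def
        by (intro UN_I[of "butlast y"]) (auto intro: exI[of _ "last y"])
    qed
    also have "card (D - {t}) = card D - 1" using t(1) fin by simp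
    finally show ?thesis .
  qed
  have "(\<Sum>x\<in>D. degD d D x) = (\<Sum>x\<in>D. card (Ch x) + card (Pa x))"
    by (rule sum.cong) (auto simp: split)
  also have "\<dots> = 2 * (card D - 1)" using s1 s2 by (simp add: sum.distrib)
  finally show ?thesis .
qed



lemma identity:
  assumes "is_domain d D" "d \<ge> 2"
  shows "int (d - 1) * int (card (bdry d D)) = tau d D + int (d - 2) * int (card D) + 2"
proof -
  have fin: "finite D" and ne: "D \<noteq> {}" using assms by (auto simp: is_domain_def)
  have bsub: "bdry d D \<subseteq> D" by (auto simp: bdry_def)
  have inner: "degD d D x = d" if "x \<in> D - bdry d D" for x
    using that degD_le[of d D x] assms(2) by (auto simp: bdry_def)
  have "(\<Sum>x\<in>D. degD d D x) = (\<Sum>x\<in>bdry d D. degD d D x) + (\<Sum>x\<in>D - bdry d D. degD d D x)"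
    using fin bsub by (metis add.commute sum.subset_diff)
  also have "(\<Sum>x\<in>D - bdry d D. degD d D x) = d * card (D - bdry d D)"
    using inner by simp
  finally have e1: "2 * (card D - 1) = (\<Sum>x\<in>bdry d D. degD d D x) + d * (card D - card (bdry d D))"
    using degree_sum[OF assms(1)] fin bsub by (simp add: card_Diff_subset finite_subset)
  have cb: "card (bdry d D) \<le> card D" using fin bsub card_mono by blast
  have c1: "card D \<ge> 1" using fin ne by (simp add: Suc_leI card_gt_0_iff)
  have t: "tau d D = int (\<Sum>x\<in>bdry d D. degD d D x) - int (card (bdry d D))"
    unfolding tau_def by (simp add: sum_subtractf)
  have e2: "2 * (int (card D) - 1) = int (\<Sum>x\<in>bdry d D. degD d D x) + int d * (int (card D) - int (card (bdry d D)))"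
    using arg_cong[OF e1, of int] cb c1 by (simp add: of_nat_diff)
  show ?thesis using e2 t assms(2) by (simp add: of_nat_diff algebra_simps)
qed

lemma deg_pos:
  assumes "is_domain d D" "card D \<ge> 2" "x \<in> D"
  shows "degD d D x \<ge> 1"
proof -
  have fin: "finite D" using assms by (auto simp: is_domain_def)
  have "D - {x} \<noteq> {}"
  proof
    assume "D - {x} = {}"
    then have "D \<subseteq> {x}" by auto
    then have "card D \<le> card {x}" by (intro card_mono) auto
    then show False using assms(2) by simp
  qed
  then obtain y where "y \<in> D" "y \<noteq> x" by auto
  then have "(x, y) \<in> (induced_edges d D)\<^sup>*" using assms by (auto simp: is_domain_def)
  then obtain z where "(x, z) \<in> induced_edges d D" using \<open>y \<noteq> x\<close>
    by (metis converse_rtranclE)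
  then have "z \<in> {w \<in> D. tree_adj d x w}" by (auto simp: induced_edges_def)
  moreover have "finite {w \<in> D. tree_adj d x w}" using fin by simp
  ultimately have "card {w \<in> D. tree_adj d x w} > 0" by (auto simp: card_gt_0_iff)
  then show ?thesis unfolding degD_def by simp
qed

lemma tau_nonneg:
  assumes "is_domain d D" "card D \<ge> 2"
  shows "tau d D \<ge> 0"
  unfolding tau_def using deg_pos[OF assms] by (intro sum_nonneg) (force simp: bdry_def)

lemma add_leaf:
  assumes dom: "is_domain d D" and x: "x \<in> D" and y: "y \<notin> D" and adj: "tree_adj d x y"
  shows "is_domain d (insert y D)" "card (insert y D) = card D + 1"
    "degD d (insert y D) y = 1" "degD d (insert y D) x = degD d D x + 1"
    "\<And>z. z \<in> D \<Longrightarrow> z \<noteq> x \<Longrightarrow> degD d (insert y D) z = degD d D z"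
proof -
  have fin: "finite D" and ne: "D \<noteq> {}" and sub: "D \<subseteq> tree_vertices d"
    using dom by (auto simp: is_domain_def)
  let ?D' = "insert y D"
  have yt: "y \<in> tree_vertices d" using adj by (auto simp: tree_adj_def)
  have adj': "tree_adj d y x" using adj by (auto simp: tree_adj_def)
  have Emono: "induced_edges d D \<subseteq> induced_edges d ?D'" by (auto simp: induced_edges_def)
  have xy: "(x, y) \<in> induced_edges d ?D'" "(y, x) \<in> induced_edges d ?D'"
    using x adj adj' by (auto simp: induced_edges_def)
  have conn: "(a, b) \<in> (induced_edges d ?D')\<^sup>*" if "a \<in> D" "b \<in> D" for a b
    using dom that rtrancl_mono[OF Emono] by (auto simp: is_domain_def)
  show dom': "is_domain d ?D'"
    unfolding is_domain_def
  proof (intro conjI ballI)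
    fix a b assume a: "a \<in> ?D'" and b: "b \<in> ?D'"
    show "(a, b) \<in> (induced_edges d ?D')\<^sup>*"
    proof (cases "a = y")
      case True
      show ?thesis
      proof (cases "b = y")
        case True then show ?thesis using \<open>a = y\<close> by simp
      next
        case False
        then have "b \<in> D" using b by simp
        then show ?thesis using True xy(2) conn[OF x] by (meson converse_rtrancl_into_rtrancl)
      qed
    next
      case False
      then have aD: "a \<in> D" using a by simp
      show ?thesis
      proof (cases "b = y")
        case True then show ?thesis using xy(1) conn[OF aD x] by (meson rtrancl_into_rtrancl)
      next
        case False then show ?thesis using b conn[OF aD] by simp
      qed
    qed
  qed (use fin sub yt in auto)
  show cD: "card ?D' = card D + 1" using fin y by simp
  have c1: "card D \<ge> 1" using fin ne by (simp add: Suc_leI card_gt_0_iff)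
  have S: "(\<Sum>z\<in>?D'. degD d ?D' z) = (\<Sum>z\<in>D. degD d D z) + 2"
    using degree_sum[OF dom'] degree_sum[OF dom] cD c1 by simp
  have S2: "(\<Sum>z\<in>?D'. degD d ?D' z) = degD d ?D' y + (\<Sum>z\<in>D. degD d ?D' z)"
    using fin y by simp
  have finD': "finite ?D'" using fin by simp
  have dy: "degD d ?D' y \<ge> 1"
    using deg_pos[OF dom'] cD c1 by simp
  define g where "g z = degD d D z + (if z = x then 1 else 0)" for z
  have gle: "g z \<le> degD d ?D' z" if "z \<in> D" for z
  proof (cases "z = x")
    case True
    have "insert y {w \<in> D. tree_adj d x w} \<subseteq> {w \<in> ?D'. tree_adj d x w}" using adj by auto
    then have "card (insert y {w \<in> D. tree_adj d x w}) \<le> degD d ?D' x"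
      unfolding degD_def using finD' by (intro card_mono) auto
    then show ?thesis using True y fin by (simp add: g_def degD_def)
  next
    case False then show ?thesis using degD_mono[of D ?D' d z] finD' by (auto simp: g_def)
  qed
  have gs: "(\<Sum>z\<in>D. g z) = (\<Sum>z\<in>D. degD d D z) + 1"
    using fin x by (simp add: g_def sum.distrib)
  have le1: "(\<Sum>z\<in>D. g z) \<le> (\<Sum>z\<in>D. degD d ?D' z)" using gle by (intro sum_mono) auto
  have eqs: "(\<Sum>z\<in>D. g z) = (\<Sum>z\<in>D. degD d ?D' z)" and dy1: "degD d ?D' y = 1"
    using S S2 gs le1 dy by linarith+
  show "degD d ?D' y = 1" by (rule dy1)
  have pt: "g z = degD d ?D' z" if "z \<in> D" for z
    by (rule sum_mono_inv[OF eqs]) (use gle that fin in auto)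
  show "degD d ?D' x = degD d D x + 1" using pt[OF x] by (simp add: g_def)
  show "\<And>z. z \<in> D \<Longrightarrow> z \<noteq> x \<Longrightarrow> degD d ?D' z = degD d D z"
    using pt unfolding g_def by (metis add.right_neutral)
qed



definition good :: "nat \<Rightarrow> nat list set \<Rightarrow> bool" where
  "good d D \<longleftrightarrow> (\<exists>x. \<forall>z\<in>D. 2 \<le> degD d D z \<and> degD d D z < d \<longrightarrow> z = x)"

lemma good_tau:
  assumes "is_domain d D" "card D \<ge> 2" "good d D" "d \<ge> 2"
  shows "tau d D \<le> int d - 2"
proof -
  obtain x where x: "\<And>z. z \<in> D \<Longrightarrow> 2 \<le> degD d D z \<Longrightarrow> degD d D z < d \<Longrightarrow> z = x"
    using assms(3) by (auto simp: good_def)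
  have fin: "finite D" using assms by (auto simp: is_domain_def)
  have finb: "finite (bdry d D)" using fin by (auto simp: bdry_def)
  have "tau d D \<le> (\<Sum>z\<in>bdry d D. if z = x then int d - 2 else 0)"
    unfolding tau_def
  proof (rule sum_mono)
    fix z assume z: "z \<in> bdry d D"
    then have zD: "z \<in> D" and lt: "degD d D z < d" by (auto simp: bdry_def)
    have ge: "degD d D z \<ge> 1" using deg_pos[OF assms(1,2) zD] .
    show "int (degD d D z) - 1 \<le> (if z = x then int d - 2 else 0)"
    proof (cases "z = x")
      case True then show ?thesis using lt by simp
    next
      case False
      then have "\<not> 2 \<le> degD d D z" using x[OF zD] lt by blast
      then show ?thesis using False ge by simp
    qed
  qed
  also have "\<dots> = (if x \<in> bdry d D then int d - 2 else 0)"
    using finb by (simp add: sum.delta')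
  also have "\<dots> \<le> int d - 2" using assms(4) by simp
  finally show ?thesis .
qed

lemma exists_good:
  assumes "d \<ge> 2" "k \<ge> 2"
  shows "\<exists>D. is_domain d D \<and> card D = k \<and> good d D"
  using assms(2)
proof (induction k rule: nat_induct_at_least)
  case base
  define D where "D = {[], [0::nat]}"
  have adj1: "tree_adj d [] [0]" "tree_adj d [0] []" using assms(1)
    by (auto simp: tree_adj_def)
  have "is_domain d D"
    unfolding is_domain_def
  proof (intro conjI ballI)
    fix a b assume "a \<in> D" "b \<in> D"
    moreover have "([], [0]) \<in> induced_edges d D" "([0], []) \<in> induced_edges d D"
      using adj1 by (auto simp: induced_edges_def D_def)
    ultimately show "(a, b) \<in> (induced_edges d D)\<^sup>*" by (auto simp: D_def)
  qed (use assms(1) in \<open>auto simp: D_def\<close>)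
  moreover have "card D = 2" by (simp add: D_def)
  moreover have "degD d D z \<le> 1" if "z \<in> D" for z
  proof -
    have "{y \<in> D. tree_adj d z y} \<subseteq> D - {z}" by (auto simp: tree_adj_def)
    then have "degD d D z \<le> card (D - {z})" unfolding degD_def by (intro card_mono) (auto simp: D_def)
    then show ?thesis using that by (auto simp: D_def)
  qed
  then have "good d D" unfolding good_def by force
  ultimately show ?case by blast
next
  case (Suc k)
  then obtain D where D: "is_domain d D" "card D = k" "good d D" by blast
  obtain x0 where x0: "\<And>z. z \<in> D \<Longrightarrow> 2 \<le> degD d D z \<Longrightarrow> degD d D z < d \<Longrightarrow> z = x0"
    using D(3) by (auto simp: good_def)
  have fin: "finite D" and ne: "D \<noteq> {}" and sub: "D \<subseteq> tree_vertices d"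
    using D(1) by (auto simp: is_domain_def)
  obtain v where v: "v \<in> D" "degD d D v < d"
    and vmid: "(\<exists>z\<in>D. 2 \<le> degD d D z \<and> degD d D z < d) \<Longrightarrow> 2 \<le> degD d D v"
  proof (cases "\<exists>z\<in>D. 2 \<le> degD d D z \<and> degD d D z < d")
    case True
    then obtain z where "z \<in> D" "2 \<le> degD d D z" "degD d D z < d" by blast
    then show ?thesis using that by blast
  next
    case False
    define M where "M = Max (length ` D)"
    have "M \<in> length ` D" using fin ne by (simp add: M_def)
    then obtain w where w: "w \<in> D" "length w = M" by auto
    have wmax: "length z \<le> length w" if "z \<in> D" for z using that fin w by (simp add: M_def)
    have "{y \<in> D. tree_adj d w y} \<subseteq> {butlast w}"
    proof
      fix y assume y: "y \<in> {y \<in> D. tree_adj d w y}"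
      then have "y \<in> D" "(\<exists>i. y = w @ [i]) \<or> (\<exists>i. w = y @ [i])" by (auto simp: tree_adj_def)
      then show "y \<in> {butlast w}" using wmax[of y] by auto
    qed
    then have "degD d D w \<le> 1" unfolding degD_def
      by (metis card.empty card.insert empty_iff finite.intros(1) card_mono finite.emptyI
          finite_insert One_nat_def)
    then have "degD d D w < d" using assms(1) by simp
    then show ?thesis using that w False by blast
  qed
  obtain y where y: "tree_adj d v y" "y \<notin> D"
    using exists_outside[of v d D] v sub assms(1) by auto
  note L = add_leaf[OF D(1) v(1) y(2) y(1)]
  have "good d (insert y D)"
    unfolding good_def
  proof (intro exI[of _ v] ballI impI)
    fix z assume z: "z \<in> insert y D" and m: "2 \<le> degD d (insert y D) z \<and> degD d (insert y D) z < d"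
    show "z = v"
    proof (rule ccontr)
      assume "z \<noteq> v"
      moreover have "z \<noteq> y" using m L(3) by auto
      ultimately have zD: "z \<in> D" and eq: "degD d (insert y D) z = degD d D z"
        using z L(5) by auto
      then have "2 \<le> degD d D z \<and> degD d D z < d" using m by simp
      then have "2 \<le> degD d D v" using vmid zD by blast
      then have "v = x0" using x0 v by blast
      moreover have "z = x0" using x0 zD \<open>2 \<le> degD d D z \<and> degD d D z < d\<close> by blast
      ultimately show False using \<open>z \<noteq> v\<close> by simp
    qed
  qed
  then show ?case using L(1,2) D(2) by auto
qed

lemma card_bdry_le: "is_domain d D \<Longrightarrow> card (bdry d D) \<le> card D"
  by (intro card_mono) (auto simp: is_domain_def bdry_def)

lemma criterion:
  assumes "d \<ge> 2" "is_domain d D" "card D \<ge> 2"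
  shows "optimal d D \<longleftrightarrow> tau d D \<le> int d - 2"
proof -
  define k where "k = card D"
  define S where "S = {card (bdry d D') | D'. is_domain d D' \<and> card D' = k}"
  have finS: "finite S"
  proof (rule finite_subset)
    show "S \<subseteq> {..k}" using card_bdry_le by (auto simp: S_def)
  qed simp
  have inS: "card (bdry d D) \<in> S" using assms by (auto simp: S_def k_def)
  have opt: "optimal d D \<longleftrightarrow> card (bdry d D) = Min S"
    by (simp add: optimal_def Iso_def S_def k_def)
  have key: "int (d - 1) * (int (card (bdry d D)) - int (card (bdry d D'))) = tau d D - tau d D'"
    if "is_domain d D'" "card D' = k" for D'
    using identity[OF assms(2,1)] identity[OF that(1) assms(1)] that(2) k_def
    by (simp add: algebra_simps)
  have dpos: "int (d - 1) \<ge> 1" using assms(1) by simp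
  show ?thesis
  proof
    assume "optimal d D"
    show "tau d D \<le> int d - 2"
    proof (rule ccontr)
      assume H: "\<not> tau d D \<le> int d - 2"
      obtain D' where D': "is_domain d D'" "card D' = k" "good d D'"
        using exists_good[OF assms(1), of k] assms(3) k_def by blast
      have t': "tau d D' \<le> int d - 2" using good_tau[OF D'(1) _ D'(3) assms(1)] D'(2) assms(3) k_def by simp
      have "int (d - 1) * (int (card (bdry d D)) - int (card (bdry d D'))) > 0"
        using key[OF D'(1,2)] H t' by linarith
      then have "int (card (bdry d D)) - int (card (bdry d D')) > 0"
        using dpos by (meson zero_less_mult_pos less_le_trans zero_less_one)
      moreover have "card (bdry d D') \<in> S" using D' by (auto simp: S_def)
      then have "Min S \<le> card (bdry d D')" using finS by simp
      ultimately show False using opt \<open>optimal d D\<close> by simp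
    qed
  next
    assume T: "tau d D \<le> int d - 2"
    have "card (bdry d D) \<le> s" if sS: "s \<in> S" for s
    proof -
      obtain D' where D': "is_domain d D'" "card D' = k" "s = card (bdry d D')"
        using sS by (auto simp: S_def)
      have t0: "tau d D' \<ge> 0" using tau_nonneg[OF D'(1)] D'(2) assms(3) k_def by simp
      show ?thesis
      proof (rule ccontr)
        assume "\<not> card (bdry d D) \<le> s"
        then have "int (card (bdry d D)) - int (card (bdry d D')) \<ge> 1" using D'(3) by simp
        then have "int (d - 1) * (int (card (bdry d D)) - int (card (bdry d D'))) \<ge> int (d - 1) * 1"
          using dpos by (intro mult_left_mono) auto
        moreover have "int (d - 1) = int d - 1" using assms(1) by simp
        ultimately show False using key[OF D'(1,2)] T t0 by linarith
      qed
    qed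
    then have "card (bdry d D) = Min S" using finS inS by (intro Min_eqI[symmetric]) auto
    then show "optimal d D" using opt by simp
  qed
qed



lemma tau_as_sum:
  assumes "finite E"
  shows "tau d E = (\<Sum>x\<in>E. if degD d E x < d then int (degD d E x) - 1 else 0)"
  unfolding tau_def bdry_def using assms by (simp add: sum.inter_filter)

lemma glue_tau:
  assumes d2: "d \<ge> 2" and g: "glued_at d D m Ds p"
  shows "is_domain d D" "card D \<ge> 2"
    "tau d D = (if p \<in> bdry d D then (\<Sum>i = 1..m. tau d (Ds i)) + (int m - 1)
                else (\<Sum>i = 1..m. tau d (Ds i)) - (int d - int m))"
proof -
  let ?I = "{1..m}"
  define A where "A i = Ds i - {p}" for i
  have m2: "2 \<le> m" and dom: "\<And>i. i \<in> ?I \<Longrightarrow> is_domain d (Ds i)"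
    and c2: "\<And>i. i \<in> ?I \<Longrightarrow> card (Ds i) \<ge> 2"
    and pb: "\<And>i. i \<in> ?I \<Longrightarrow> p \<in> bdry d (Ds i)"
    and Du: "D = (\<Union>i\<in>?I. Ds i)"
    and dis: "\<And>i j. i \<in> ?I \<Longrightarrow> j \<in> ?I \<Longrightarrow> i \<noteq> j \<Longrightarrow> Ds i \<inter> Ds j = {p}"
    using g unfolding glued_at_def by blast+
  have finI: "finite (Ds i)" if "i \<in> ?I" for i using dom[OF that] by (auto simp: is_domain_def)
  have pin: "p \<in> Ds i" if "i \<in> ?I" for i using pb[OF that] by (auto simp: bdry_def)
  have finA: "finite (A i)" if "i \<in> ?I" for i using finI[OF that] by (simp add: A_def)
  have disA: "A i \<inter> A j = {}" if "i \<in> ?I" "j \<in> ?I" "i \<noteq> j" for i j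
    using dis[OF that] by (auto simp: A_def)
  have DA: "D = insert p (\<Union>i\<in>?I. A i)"
    using Du pin m2 by (auto simp: A_def)
  have pnA: "p \<notin> (\<Union>i\<in>?I. A i)" by (auto simp: A_def)
  have finU: "finite (\<Union>i\<in>?I. A i)" using finA by auto
  have finD: "finite D" using DA finU by simp
  have oneI: "1 \<in> ?I" using m2 by simp
  have subD: "Ds i \<subseteq> D" if "i \<in> ?I" for i using Du that by auto
  show domD: "is_domain d D"
    unfolding is_domain_def
  proof (intro conjI ballI)
    fix a b assume a: "a \<in> D" and b: "b \<in> D"
    obtain i where i: "i \<in> ?I" "a \<in> Ds i" using a Du by auto
    obtain j where j: "j \<in> ?I" "b \<in> Ds j" using b Du by auto
    have mono: "(induced_edges d (Ds k))\<^sup>* \<subseteq> (induced_edges d D)\<^sup>*" if "k \<in> ?I" for k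
      using subD[OF that] by (intro rtrancl_mono) (auto simp: induced_edges_def)
    have "(a, p) \<in> (induced_edges d D)\<^sup>*"
      using dom[OF i(1)] i pin[OF i(1)] mono[OF i(1)] by (auto simp: is_domain_def)
    moreover have "(p, b) \<in> (induced_edges d D)\<^sup>*"
      using dom[OF j(1)] j pin[OF j(1)] mono[OF j(1)] by (auto simp: is_domain_def)
    ultimately show "(a, b) \<in> (induced_edges d D)\<^sup>*" by simp
  next
    show "D \<subseteq> tree_vertices d" using Du dom unfolding is_domain_def by blast
  qed (use finD DA in auto)
  show "card D \<ge> 2"
    using card_mono[OF finD subD[OF oneI]] c2[OF oneI] by simp
  have cardA: "card (A i) = card (Ds i) - 1" if "i \<in> ?I" for i
    using pin[OF that] finI[OF that] by (simp add: A_def)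
  have cardD: "card D = 1 + (\<Sum>i\<in>?I. card (Ds i) - 1)"
  proof -
    have "card D = 1 + card (\<Union>i\<in>?I. A i)" using DA pnA finU by simp
    also have "card (\<Union>i\<in>?I. A i) = (\<Sum>i\<in>?I. card (A i))"
      using finA disA by (intro card_UN_disjoint) auto
    finally show ?thesis using cardA by simp
  qed
  let ?dp = "\<lambda>i. degD d (Ds i) p"
  have degp: "degD d D p \<ge> (\<Sum>i\<in>?I. ?dp i)"
  proof -
    have "(\<Sum>i\<in>?I. ?dp i) = card (\<Union>i\<in>?I. {y \<in> Ds i. tree_adj d p y})"
      unfolding degD_def
    proof (rule card_UN_disjoint[symmetric])
      show "\<forall>i\<in>?I. \<forall>j\<in>?I. i \<noteq> j \<longrightarrow> {y \<in> Ds i. tree_adj d p y} \<inter> {y \<in> Ds j. tree_adj d p y} = {}"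
      proof (intro ballI impI)
        fix i j assume "i \<in> ?I" "j \<in> ?I" "i \<noteq> j"
        then have "Ds i \<inter> Ds j = {p}" by (rule dis)
        moreover have "\<not> tree_adj d p p" by (auto simp: tree_adj_def)
        ultimately show "{y \<in> Ds i. tree_adj d p y} \<inter> {y \<in> Ds j. tree_adj d p y} = {}"
        proof (intro equals0I)
          fix y assume Dij: "Ds i \<inter> Ds j = {p}" and np: "\<not> tree_adj d p p"
            and y: "y \<in> {y \<in> Ds i. tree_adj d p y} \<inter> {y \<in> Ds j. tree_adj d p y}"
          from y have "y \<in> Ds i \<inter> Ds j" by simp
          then have "y = p" using Dij by simp
          moreover from y have "tree_adj d p y" by simp
          ultimately show False using np by simp
        qed
      qed
    next
      show "\<forall>i\<in>?I. finite {y \<in> Ds i. tree_adj d p y}"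
      proof
        fix i assume "i \<in> ?I"
        then show "finite {y \<in> Ds i. tree_adj d p y}" using finI by simp
      qed
    qed simp
    also have "\<dots> \<le> degD d D p"
      unfolding degD_def
    proof (rule card_mono)
      show "finite {y \<in> D. tree_adj d p y}" using finD by simp
      show "(\<Union>i\<in>?I. {y \<in> Ds i. tree_adj d p y}) \<subseteq> {y \<in> D. tree_adj d p y}"
        using subD by blast
    qed
    finally show ?thesis .
  qed
  have sumD: "(\<Sum>x\<in>D. degD d D x) = degD d D p + (\<Sum>i\<in>?I. \<Sum>x\<in>A i. degD d D x)"
    using DA pnA finU finA disA by (simp add: sum.UNION_disjoint)
  have sumi: "(\<Sum>x\<in>Ds i. degD d (Ds i) x) = ?dp i + (\<Sum>x\<in>A i. degD d (Ds i) x)" if "i \<in> ?I" for i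
    using sum.remove[OF finI[OF that] pin[OF that]] by (simp add: A_def)
  have le2: "(\<Sum>i\<in>?I. \<Sum>x\<in>A i. degD d (Ds i) x) \<le> (\<Sum>i\<in>?I. \<Sum>x\<in>A i. degD d D x)"
    using degD_mono[OF subD finD] by (intro sum_mono) auto
  have tot: "(\<Sum>i\<in>?I. ?dp i) + (\<Sum>i\<in>?I. \<Sum>x\<in>A i. degD d (Ds i) x) = (\<Sum>x\<in>D. degD d D x)"
  proof -
    have "(\<Sum>i\<in>?I. ?dp i) + (\<Sum>i\<in>?I. \<Sum>x\<in>A i. degD d (Ds i) x)
        = (\<Sum>i\<in>?I. \<Sum>x\<in>Ds i. degD d (Ds i) x)"
      by (simp add: sumi sum.distrib)
    also have "\<dots> = (\<Sum>i\<in>?I. 2 * (card (Ds i) - 1))"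
      using degree_sum dom by simp
    also have "\<dots> = 2 * (card D - 1)" using cardD by (simp add: sum_distrib_left)
    also have "\<dots> = (\<Sum>x\<in>D. degD d D x)" using degree_sum[OF domD] by simp
    finally show ?thesis .
  qed
  have eqp: "degD d D p = (\<Sum>i\<in>?I. ?dp i)"
    using tot sumD degp le2 by linarith
  have eqs: "(\<Sum>i\<in>?I. \<Sum>x\<in>A i. degD d (Ds i) x) = (\<Sum>i\<in>?I. \<Sum>x\<in>A i. degD d D x)"
    using tot sumD degp le2 by linarith
  have eqx: "degD d D x = degD d (Ds i) x" if "i \<in> ?I" "x \<in> A i" for i x
  proof -
    have ei: "(\<Sum>x\<in>A i. degD d (Ds i) x) = (\<Sum>x\<in>A i. degD d D x)"
      by (rule sum_mono_inv[OF eqs]) (use that degD_mono[OF subD finD] in \<open>auto intro: sum_mono\<close>)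
    show ?thesis
      by (rule sum_mono_inv[OF ei, symmetric]) (use that degD_mono[OF subD finD] finA in auto)
  qed
  define h where "h E x = (if degD d E x < d then int (degD d E x) - 1 else 0)" for E x
  have tD: "tau d D = h D p + (\<Sum>i\<in>?I. \<Sum>x\<in>A i. h (Ds i) x)"
  proof -
    have "tau d D = (\<Sum>x\<in>D. h D x)" using tau_as_sum[OF finD] by (simp add: h_def)
    also have "\<dots> = h D p + (\<Sum>i\<in>?I. \<Sum>x\<in>A i. h D x)"
      using DA pnA finU finA disA by (simp add: sum.UNION_disjoint)
    also have "(\<Sum>i\<in>?I. \<Sum>x\<in>A i. h D x) = (\<Sum>i\<in>?I. \<Sum>x\<in>A i. h (Ds i) x)"
      using eqx by (intro sum.cong refl) (simp add: h_def)
    finally show ?thesis .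
  qed
  have ti: "tau d (Ds i) = int (?dp i) - 1 + (\<Sum>x\<in>A i. h (Ds i) x)" if "i \<in> ?I" for i
  proof -
    have "?dp i < d" using pb[OF that] by (simp add: bdry_def)
    have "tau d (Ds i) = (\<Sum>x\<in>Ds i. h (Ds i) x)"
      using tau_as_sum[OF finI[OF that], of d] by (simp add: h_def)
    also have "\<dots> = h (Ds i) p + (\<Sum>x\<in>A i. h (Ds i) x)"
      using sum.remove[OF finI[OF that] pin[OF that], of "h (Ds i)"] by (simp add: A_def)
    finally show ?thesis using \<open>?dp i < d\<close> by (simp add: h_def)
  qed
  have tsum: "(\<Sum>i\<in>?I. tau d (Ds i)) = int (degD d D p) - int m + (\<Sum>i\<in>?I. \<Sum>x\<in>A i. h (Ds i) x)"
  proof -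
    have "(\<Sum>i\<in>?I. tau d (Ds i)) = (\<Sum>i\<in>?I. int (?dp i) - 1 + (\<Sum>x\<in>A i. h (Ds i) x))"
      using ti by simp
    also have "\<dots> = int (\<Sum>i\<in>?I. ?dp i) - int m + (\<Sum>i\<in>?I. \<Sum>x\<in>A i. h (Ds i) x)"
      by (simp add: sum.distrib sum_subtractf)
    finally show ?thesis using eqp by simp
  qed
  show "tau d D = (if p \<in> bdry d D then (\<Sum>i = 1..m. tau d (Ds i)) + (int m - 1)
                else (\<Sum>i = 1..m. tau d (Ds i)) - (int d - int m))"
  proof (cases "p \<in> bdry d D")
    case True
    then have "h D p = int (degD d D p) - 1" by (simp add: h_def bdry_def)
    then show ?thesis using True tD tsum by simp
  next
    case False
    have pD: "p \<in> D" using DA by simp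
    then have "degD d D p = d" using False degD_le[of d D p] d2 by (simp add: bdry_def)
    then have "h D p = 0" by (simp add: h_def)
    then show ?thesis using False tD tsum \<open>degD d D p = d\<close> by simp
  qed
qed

theorem mainTheorem13:
  fixes d m :: nat and D :: "nat list set" and Ds :: "nat \<Rightarrow> nat list set" and p :: "nat list"
  assumes "d \<ge> 2"
    and "glued_at d D m Ds p"
  shows "optimal d D \<longleftrightarrow>
    ((p \<in> bdry d D \<and> (\<Sum>i = 1..m. tau d (Ds i)) + (int m - 1) \<le> int d - 2) \<or>
     (p \<notin> bdry d D \<and> (\<Sum>i = 1..m. tau d (Ds i)) - (int d - int m) \<le> int d - 2))"
proof -
  note G = glue_tau[OF assms]
  show ?thesis using criterion[OF assms(1) G(1) G(2)] G(3) by auto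
qed


end
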